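(* Let $q$ be a prime power and let $n, r, d$ be integers with $1 \le d \le r \le n/2$. Let $\mathcal{E}^0 \subseteq E_r(q,n)$ be the lifting $\{I({\bf C}) : {\bf C} \in \mathcal{M}\}$ of an MRD code $\mathcal{M} \subseteq \mathrm{GF}(q)^{r \times (n-r)}$ with minimum rank distance $d$ and cardinality $q^{(n-r)(r-d+1)}$. For $1 \le k \le \lfloor r/d \rfloor$ let: - $\mathcal{C}^k \subseteq \mathrm{GF}(q)^{(r-kd)\times kd}$ be an MRD code with minimum rank distance $d$ if $k \le \lfloor r/d\rfloor - 1$, and $\mathcal{C}^{\lfloor r/d \rfloor} = \{{\bf 0}\} \subseteq \mathrm{GF}(q)^{(r - \lfloor r/d\rfloor d)\times \lfloor r/d \rfloor d}$; - $\mathcal{D}^k \subseteq \mathrm{GF}(q)^{r \times (n-r-kd)}$ be an MRD code with minimum rank distance $d$ if $k \le \lfloor (n-r)/d \rfloor - 1$, and $\mathcal{D}^{\lfloor (n-r)/d\rfloor} = \{{\bf 0}\}\subseteq \mathrm{GF}(q)^{r \times (n-r-\lfloor (n-r)/d\rfloor d)}$ (when $\lfloor (n-r)/d\rfloor = \lfloor r/d \rfloor$, this is the case $k = \lfloor r/d\rfloor$). For ${\bf C} \in \mathcal{C}^k$ and ${\bf D} \in \mathcal{D}^k$, write ${\bf D} = \begin{pmatrix} {\bf D}' \\ {\bf D}''\end{pmatrix}$ with ${\bf D}'$ consisting of the first $r-kd$ rows and ${\bf D}''$ of the last $kd$ rows, and let $E^k_{{\bf C},{\bf D}} \in E_r(q,n)$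 be the row space of the $r\times n$ matrix $$\begin{pmatrix} {\bf I}_{r-kd} & {\bf C} & {\bf 0}_{(r-kd)\times kd} & {\bf D}' \\ {\bf 0}_{kd \times (r-kd)} & {\bf 0}_{kd\times kd} & {\bf I}_{kd} & {\bf D}'' \end{pmatrix}.$$ Let $\mathcal{E}^k = \{E^k_{{\bf C},{\bf D}} : {\bf C} \in \mathcal{C}^k, {\bf D}\in \mathcal{D}^k\}$ and $\mathcal{E} = \bigcup_{k=0}^{\lfloor r/d\rfloor} \mathcal{E}^k$. Then $\mathcal{E}$ has minimum injection distance $d$, i.e. the minimum of $d_{\mathrm{I}}(U,V)$ over distinct $U,V \in \mathcal{E}$ equals $d$.
   Context: $E_r(q,n)$ is the set of $r$-dimensional subspaces of $\mathrm{GF}(q)^n$. For a matrix ${\bf M}$, $R({\bf M})$ is its row space; for ${\bf C} \in \mathrm{GF}(q)^{r\times(n-r)}$ the lifting is $I({\bf C}) = R({\bf I}_r \mid {\bf C}) \in E_r(q,n)$. The injection distance is $d_{\mathrm{I}}(U,V) = \dim(U+V) - \min\{\dim U,\dim V\}$. The rank distance between matrices is $d_{\mathrm{R}}({\bf C},{\bf D}) = \mathrm{rk}({\bf C}-{\bf D})$. An MRD code in $\mathrm{GF}(q)^{m\times N}$ with minimum rank distance $d$ is a set of matrices with minimum rank distance $d$ and the maximum possible cardinality $\min\{q^{m(N-d+1)}, q^{N(m-d+1)}\}$. *)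

theory Defs
  imports "Jordan_Normal_Form.DL_Rank"
begin

text \<open>The field GF(q) is modelled by a finite field type 'a :: {field, finite}, q = card (UNIV :: 'a set).
  Vectors of GF(q)^n are elements of carrier_vec n; matrices are 'a mat.\<close>

definition hcat :: "'a::zero mat \<Rightarrow> 'a mat \<Rightarrow> 'a mat" where
  "hcat A B = mat (dim_row A) (dim_col A + dim_col B)
     (\<lambda>(i,j). if j < dim_col A then A $$ (i,j) else B $$ (i, j - dim_col A))"

definition top_rows :: "nat \<Rightarrow> 'a mat \<Rightarrow> 'a mat" where
  "top_rows a D = mat a (dim_col D) (\<lambda>(i,j). D $$ (i,j))"
definition bottom_rows :: "nat \<Rightarrow> 'a mat \<Rightarrow> 'a mat" where
  "bottom_rows b D = mat b (dim_col D) (\<lambda>(i,j). D $$ (i + (dim_row D - b), j))"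

definition row_sp :: "'a::field mat \<Rightarrow> 'a vec set" where
  "row_sp M = vec_space.row_space (dim_col M) M"

definition sub_dim :: "nat \<Rightarrow> 'a::field vec set \<Rightarrow> nat" where
  "sub_dim n W = vectorspace.dim (class_ring :: 'a ring) ((module_vec TYPE('a) n)\<lparr>carrier := W\<rparr>)"

definition sub_sum :: "'a::field vec set \<Rightarrow> 'a vec set \<Rightarrow> 'a vec set" where
  "sub_sum U V = {u + v | u v. u \<in> U \<and> v \<in> V}"

definition inj_dist :: "nat \<Rightarrow> 'a::field vec set \<Rightarrow> 'a vec set \<Rightarrow> nat" where
  "inj_dist n U V = sub_dim n (sub_sum U V) - min (sub_dim n U) (sub_dim n V)"

definition mrank :: "'a::field mat \<Rightarrow> nat" where
  "mrank A = vec_space.rank (dim_row A) A"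

definition rank_dist :: "'a::field mat \<Rightarrow> 'a mat \<Rightarrow> nat" where
  "rank_dist C D = mrank (C - D)"

definition min_rank_dist :: "'a::field mat set \<Rightarrow> nat" where
  "min_rank_dist M = Min {rank_dist C D | C D. C \<in> M \<and> D \<in> M \<and> C \<noteq> D}"

definition min_inj_dist :: "nat \<Rightarrow> 'a::field vec set set \<Rightarrow> nat" where
  "min_inj_dist n E = Min {inj_dist n U V | U V. U \<in> E \<and> V \<in> E \<and> U \<noteq> V}"

definition is_MRD :: "nat \<Rightarrow> nat \<Rightarrow> nat \<Rightarrow> 'a::{field,finite} mat set \<Rightarrow> bool" where
  "is_MRD m N d M \<longleftrightarrow> M \<subseteq> carrier_mat m N \<and> min_rank_dist M = d \<and>
     card M = min (card (UNIV :: 'a set) ^ (m * (N - d + 1))) (card (UNIV :: 'a set) ^ (N * (m - d + 1)))"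

definition lift :: "'a::field mat \<Rightarrow> 'a vec set" where
  "lift C = row_sp (hcat (1\<^sub>m (dim_row C)) C)"

text \<open>E^k_{C,D}, with a = r - kd and b = kd.\<close>
definition Ek_space :: "nat \<Rightarrow> nat \<Rightarrow> 'a::field mat \<Rightarrow> 'a mat \<Rightarrow> 'a vec set" where
  "Ek_space a b C D = row_sp
     (hcat (hcat (hcat (1\<^sub>m a) C) (0\<^sub>m a b)) (top_rows a D)
      @\<^sub>r hcat (hcat (hcat (0\<^sub>m b a) (0\<^sub>m b b)) (1\<^sub>m b)) (bottom_rows b D))"

end

theory Submission
  imports Defs
begin


context vec_space begin

lemma sd_eq: "sub_dim n W = vectorspace.dim class_ring (vs W)"
  by (simp add: sub_dim_def)

lemma vs_span: "S \<subseteq> carrier_vec n \<Longrightarrow> vectorspace class_ring (vs (span S))"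
  using span_is_subspace subspace_is_vs by simp

lemma sub_span: "S \<subseteq> carrier_vec n \<Longrightarrow> submodule class_ring (span S) V"
  using span_is_submodule by simp

lemma sd_le_card:
  assumes "finite S" "S \<subseteq> carrier_vec n"
  shows "sub_dim n (span S) \<le> card S"
proof -
  interpret W: vectorspace class_ring "vs (span S)" using vs_span assms by simp
  have S1: "S \<subseteq> span S" using in_own_span assms by simp
  have "W.span S = span S" using span_li_not_depend(1)[OF S1 sub_span] assms by simp
  then show ?thesis unfolding sd_eq using W.gen_ge_dim[of S] assms S1 by simp
qed

lemma basis_of_span:
  assumes "finite S" "S \<subseteq> carrier_vec n"
  obtains B where "finite B" "B \<subseteq> span S" "lin_indpt B" "span B = span S"
    "card B = sub_dim n (span S)"
proof -
  interpret W: vectorspace class_ring "vs (span S)" using vs_span assms by simp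
  have fd: "W.fin_dim" using fin_dim_span assms by simp
  obtain B where B: "finite B" "W.basis B" using W.finite_basis_exists[OF fd] by blast
  have Bs: "B \<subseteq> span S" using B unfolding W.basis_def by simp
  have li: "lin_indpt B" using B span_li_not_depend(2)[OF Bs sub_span[OF assms(2)]] unfolding W.basis_def by simp
  have sp: "span B = span S" using B span_li_not_depend(1)[OF Bs sub_span[OF assms(2)]] unfolding W.basis_def by simp
  have "card B = sub_dim n (span S)" unfolding sd_eq using W.dim_basis B by simp
  then show ?thesis using that B Bs li sp by blast
qed

lemma li_le_sd:
  assumes "finite S" "S \<subseteq> carrier_vec n" "B \<subseteq> span S" "lin_indpt B"
  shows "finite B" "card B \<le> sub_dim n (span S)"
proof -
  interpret W: vectorspace class_ring "vs (span S)" using vs_span assms by simp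
  have fd: "W.fin_dim" using fin_dim_span assms by simp
  have li: "W.lin_indpt B" using span_li_not_depend(2)[OF assms(3) sub_span[OF assms(2)]] assms(4) by simp
  show "finite B" "card B \<le> sub_dim n (span S)" unfolding sd_eq using W.li_le_dim[OF fd _ li] assms(3) by auto
qed

lemma sd_mono:
  assumes "finite S" "S \<subseteq> carrier_vec n" "finite T" "T \<subseteq> carrier_vec n" "S \<subseteq> span T"
  shows "sub_dim n (span S) \<le> sub_dim n (span T)"
proof -
  obtain B where B: "finite B" "B \<subseteq> span S" "lin_indpt B" "card B = sub_dim n (span S)"
    using basis_of_span[OF assms(1,2)] by metis
  have "span S \<subseteq> span T" using span_is_subset[OF assms(5) sub_span[OF assms(4)]] .
  then show ?thesis using li_le_sd(2)[OF assms(3,4) _ B(3)] B by auto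
qed


lemma span_zero_coords:
  assumes T: "T \<subseteq> carrier_vec n" and Z: "\<forall>t\<in>T. \<forall>j<m. t $ p j = 0" and p: "\<forall>j<m. p j < n"
    and x: "x \<in> span T" and j: "j < m"
  shows "x $ p j = 0"
proof -
  from x obtain a A where A: "x = lincomb a A" "finite A" "A \<subseteq> T" unfolding span_def by blast
  have "x $ p j = (\<Sum>y\<in>A. a y * y $ p j)" using A lincomb_index[OF p[rule_format, OF j]] T by auto
  also have "\<dots> = 0" using A Z j by (intro sum.neutral) auto
  finally show ?thesis .
qed

lemma key:
  assumes G: "G \<in> carrier_mat m n" and p: "\<forall>j<m. p j < n"
    and piv: "\<forall>i<m. \<forall>j<m. G $$ (i, p j) = (if i = j then 1 else 0)"
    and T: "finite T" "T \<subseteq> carrier_vec n" "\<forall>t\<in>T. \<forall>j<m. t $ p j = 0"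
  shows "m + sub_dim n (span T) \<le> sub_dim n (span (set (rows G) \<union> T))"
proof -
  define R where "R = set (rows G)"
  have R: "R = row G ` {..<m}" unfolding R_def using G by (auto simp: rows_def)
  have Rc: "R \<subseteq> carrier_vec n" using G R by auto
  have rowp: "row G i $ p j = (if i = j then 1 else 0)" if "i < m" "j < m" for i j
    using G p piv that by auto
  have inj: "inj_on (row G) {..<m}"
  proof (rule inj_onI)
    fix i j assume "i \<in> {..<m}" "j \<in> {..<m}" "row G i = row G j"
    then have "row G i $ p i = row G j $ p i" by simp
    then show "i = j" using rowp[of i i] rowp[of j i] \<open>i \<in> {..<m}\<close> \<open>j \<in> {..<m}\<close> by (cases "i = j") auto
  qed
  have cR: "card R = m" using R inj card_image by fastforce
  obtain B where B: "finite B" "B \<subseteq> span T" "lin_indpt B" "card B = sub_dim n (span T)"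
    using basis_of_span[OF T(1,2)] by metis
  have Bc: "B \<subseteq> carrier_vec n" using B(2) span_closed[OF T(2)] by auto
  have Bz: "\<forall>x\<in>B. \<forall>j<m. x $ p j = 0" using span_zero_coords[OF T(2) T(3) p] B(2) by blast
  have disj: "R \<inter> B = {}"
  proof (rule ccontr)
    assume "R \<inter> B \<noteq> {}"
    then obtain i where "i < m" "row G i \<in> B" using R by auto
    then show False using Bz rowp[of i i] by fastforce
  qed
  have finR: "finite R" using R by simp
  have li: "lin_indpt (R \<union> B)"
  proof
    assume ld: "lin_dep (R \<union> B)"
    have f1: "finite (R \<union> B)" using finR B(1) by simp
    have c1: "R \<union> B \<subseteq> carrier_vec n" using Rc Bc by simp
    obtain a v where av: "a \<in> (R \<union> B) \<rightarrow> UNIV" "lincomb a (R \<union> B) = 0\<^sub>v n" "v \<in> R \<union> B" "a v \<noteq> 0"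
      using finite_lin_dep[OF f1 ld] c1 by force
    have sumsplit: "lincomb a (R \<union> B) $ i = (\<Sum>x\<in>R. a x * x $ i) + (\<Sum>x\<in>B. a x * x $ i)" if "i < n" for i
    proof -
      have "lincomb a (R \<union> B) $ i = (\<Sum>x\<in>R \<union> B. a x * x $ i)"
        using lincomb_index[OF that, of "R \<union> B" a] Rc Bc by simp
      also have "\<dots> = (\<Sum>x\<in>R. a x * x $ i) + (\<Sum>x\<in>B. a x * x $ i)"
        by (rule sum.union_disjoint[OF finR B(1) disj])
      finally show ?thesis .
    qed
    have aR: "a (row G j) = 0" if j: "j < m" for j
    proof -
      have "0 = lincomb a (R \<union> B) $ p j" using av(2) p j by simp
      also have "\<dots> = (\<Sum>x\<in>R. a x * x $ p j)" using sumsplit[of "p j"] p j Bz by simp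
      also have "\<dots> = (\<Sum>i\<in>{..<m}. a (row G i) * row G i $ p j)"
        unfolding R using sum.reindex[OF inj] by simp
      also have "\<dots> = (\<Sum>i\<in>{..<m}. if i = j then a (row G j) else 0)"
        using rowp j by (intro sum.cong) auto
      also have "\<dots> = a (row G j)" using j by simp
      finally show ?thesis by simp
    qed
    have aR': "\<forall>x\<in>R. a x = 0" using aR R by auto
    have lb: "lincomb a B = 0\<^sub>v n"
    proof (rule eq_vecI)
      show "dim_vec (lincomb a B) = dim_vec (0\<^sub>v n)" using lincomb_closed[OF Bc] by simp
      fix i assume "i < dim_vec (0\<^sub>v n)"
      then have i: "i < n" by simp
      have "0 = lincomb a (R \<union> B) $ i" using av(2) i by simp
      also have "\<dots> = (\<Sum>x\<in>B. a x * x $ i)" using sumsplit[OF i] aR' by simp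
      also have "\<dots> = lincomb a B $ i" using lincomb_index[OF i Bc] by simp
      finally show "lincomb a B $ i = 0\<^sub>v n $ i" using i by simp
    qed
    have "v \<in> B" using av aR' by auto
    then have "lin_dep B" using lin_dep_crit[OF B(1) subset_refl _ _ _ lb, of v] av(4) by auto
    then show False using B(3) by simp
  qed
  have fRT: "finite (R \<union> T)" using finR T by simp
  have cRT: "R \<union> T \<subseteq> carrier_vec n" using Rc T by simp
  have sub: "R \<union> B \<subseteq> span (R \<union> T)"
  proof -
    have "R \<subseteq> span (R \<union> T)" using in_own_span[OF cRT] by auto
    moreover have "span T \<subseteq> span (R \<union> T)" using span_is_monotone[of T "R \<union> T"] by auto
    ultimately show ?thesis using B(2) by auto
  qed
  have "card (R \<union> B) \<le> sub_dim n (span (R \<union> T))" using li_le_sd(2)[OF fRT cRT sub li] .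
  moreover have "card (R \<union> B) = m + sub_dim n (span T)"
    using card_Un_disjoint[OF finR B(1) disj] cR B(4) by simp
  ultimately show ?thesis unfolding R_def by simp
qed

lemma span_carrier: "S \<subseteq> carrier_vec n \<Longrightarrow> span S \<subseteq> carrier_vec n"
  using span_closed by auto

lemma own_span: "S \<subseteq> carrier_vec n \<Longrightarrow> S \<subseteq> span S"
  using in_own_span by simp

lemma span_mono': "S \<subseteq> T \<Longrightarrow> span S \<subseteq> span T"
  using span_is_monotone by simp

lemma span_sub_span: "T \<subseteq> carrier_vec n \<Longrightarrow> S \<subseteq> span T \<Longrightarrow> span S \<subseteq> span T"
  using span_is_subset[OF _ sub_span] by simp

lemma span_add_closed: "S \<subseteq> carrier_vec n \<Longrightarrow> v \<in> span S \<Longrightarrow> w \<in> span S \<Longrightarrow> v + w \<in> span S"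
  using span_add1[of S v w] by simp

lemma span_minus_closed: assumes "S \<subseteq> carrier_vec n" "v \<in> span S" "w \<in> span S"
  shows "v - w \<in> span S"
proof -
  have wc: "w \<in> carrier_vec n" "v \<in> carrier_vec n" using span_carrier[OF assms(1)] assms by auto
  have "- w \<in> span S" using span_neg[OF _ assms(3)] assms(1) wc by simp
  then have "v + (- w) \<in> span S" using span_add_closed assms by blast
  then show ?thesis using wc by (simp add: minus_add_uminus_vec)
qed

end



abbreviation vspan :: "nat \<Rightarrow> 'a::field vec set \<Rightarrow> 'a vec set" where
  "vspan N S \<equiv> LinearCombinations.module.span class_ring (module_vec TYPE('a) N) S"

lemma mrank_eq: "A \<in> carrier_mat m N \<Longrightarrow> mrank A = sub_dim m (vspan m (set (cols A)))"
  by (simp add: mrank_def vec_space.rank_def sub_dim_def)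

lemma row_sp_eq: "row_sp G = vspan (dim_col G) (set (rows G))"
  by (simp add: row_sp_def vec_space.row_space_def)

lemma row_le_col:
  fixes A :: "'a::field mat"
  assumes A: "A \<in> carrier_mat m N"
  shows "sub_dim N (vspan N (set (rows A))) \<le> mrank A"
proof -
  have fc: "finite (set (cols A))" "set (cols A) \<subseteq> carrier_vec m" using A by (auto simp: cols_def)
  obtain B where B: "finite B" "B \<subseteq> vspan m (set (cols A))" "LinearCombinations.module.lin_indpt class_ring (module_vec TYPE('a) m) B"
    "vspan m B = vspan m (set (cols A))" "card B = sub_dim m (vspan m (set (cols A)))"
    using vec_space.basis_of_span[OF fc] by metis
  have Bc: "B \<subseteq> carrier_vec m" using B(2) vec_space.span_carrier[OF fc(2)] by auto
  obtain bs where bs: "set bs = B" "distinct bs" using finite_distinct_list[OF B(1)] by blast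
  define c where "c = length bs"
  have cB: "c = card B" using bs distinct_card c_def by fastforce
  define P where "P = mat_of_cols m bs"
  have P: "P \<in> carrier_mat m c" unfolding P_def c_def by simp
  have cP: "set (cols P) = B" unfolding P_def using bs Bc by simp
  have ex: "\<exists>x. x \<in> carrier_vec c \<and> P *\<^sub>v x = col A j" if j: "j < N" for j
  proof -
    have "col A j \<in> set (cols A)" using j A by (auto simp: cols_def)
    then have "col A j \<in> vspan m (set (cols A))" using vec_space.own_span[OF fc(2)] by auto
    then have "col A j \<in> vec_space.col_space m P" unfolding vec_space.col_space_def cP B(4) .
    then show ?thesis using vec_space.col_space_eq[OF P] P by auto
  qed
  define x where "x j = (SOME x. x \<in> carrier_vec c \<and> P *\<^sub>v x = col A j)" for j
  have x: "x j \<in> carrier_vec c" "P *\<^sub>v x j = col A j" if "j < N" for j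
    using someI_ex[OF ex[OF that]] unfolding x_def by auto
  define Y where "Y = mat c N (\<lambda>(k,j). x j $ k)"
  have Y: "Y \<in> carrier_mat c N" unfolding Y_def by simp
  have colY: "col Y j = x j" if "j < N" for j
    using x[OF that] that unfolding Y_def by (auto simp: col_def)
  have rows_in: "set (rows A) \<subseteq> vspan N (set (rows Y))"
  proof
    fix w assume "w \<in> set (rows A)"
    then obtain i where i: "i < m" "w = row A i" using A by (auto simp: rows_def)
    have rP: "row P i \<in> carrier_vec c" using P i by simp
    have "Y\<^sup>T *\<^sub>v row P i = w"
    proof (rule eq_vecI)
      show "dim_vec (Y\<^sup>T *\<^sub>v row P i) = dim_vec w" using Y A i by simp
      fix j assume "j < dim_vec w"
      then have j: "j < N" using A i by simp
      have "(Y\<^sup>T *\<^sub>v row P i) $ j = col Y j \<bullet> row P i" using Y j by simp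
      also have "\<dots> = row P i \<bullet> x j" using colY[OF j] comm_scalar_prod[OF x(1)[OF j] rP] by simp
      also have "\<dots> = (P *\<^sub>v x j) $ i" using P i by simp
      also have "\<dots> = A $$ (i, j)" using x(2)[OF j] A i j by simp
      also have "\<dots> = w $ j" using i A j by simp
      finally show "(Y\<^sup>T *\<^sub>v row P i) $ j = w $ j" .
    qed
    then have "w \<in> vec_space.row_space N Y" using vec_space.row_space_eq[OF Y] Y rP i A by auto
    then show "w \<in> vspan N (set (rows Y))" unfolding vec_space.row_space_def .
  qed
  have fr: "finite (set (rows A))" "set (rows A) \<subseteq> carrier_vec N" using A by (auto simp: rows_def)
  have fy: "finite (set (rows Y))" "set (rows Y) \<subseteq> carrier_vec N" using Y by (auto simp: rows_def)
  have "sub_dim N (vspan N (set (rows A))) \<le> sub_dim N (vspan N (set (rows Y)))"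
    using vec_space.sd_mono[OF fr fy rows_in] .
  also have "\<dots> \<le> card (set (rows Y))" using vec_space.sd_le_card[OF fy] .
  also have "\<dots> \<le> length (rows Y)" by (rule card_length)
  also have "\<dots> = c" using Y by simp
  finally show ?thesis using cB B(5) mrank_eq[OF A] by simp
qed

lemma mrank_transpose:
  fixes A :: "'a::field mat"
  assumes A: "A \<in> carrier_mat m N"
  shows "mrank (A\<^sup>T) = mrank A"
proof -
  have AT: "A\<^sup>T \<in> carrier_mat N m" using A by simp
  have 1: "mrank (A\<^sup>T) \<le> mrank A" using row_le_col[OF A] mrank_eq[OF AT] by simp
  have 2: "mrank A \<le> mrank (A\<^sup>T)" using row_le_col[OF AT] mrank_eq[OF A] by simp
  show ?thesis using 1 2 by simp
qed




definition gen :: "nat \<Rightarrow> nat \<Rightarrow> 'a mat \<Rightarrow> 'a mat \<Rightarrow> 'a::field mat" where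
 "gen a b C D = mat (a+b) (a+b+b+dim_col D) (\<lambda>(i,j).
    if i < a then (if j < a then (if i = j then 1 else 0) else if j < a+b then C $$ (i, j-a)
       else if j < a+b+b then 0 else D $$ (i, j-(a+b+b)))
    else (if j < a+b then 0 else if j < a+b+b then (if i + b = j then 1 else 0) else D $$ (i, j-(a+b+b))))"

lemma gen_carrier[simp]: "gen a b C D \<in> carrier_mat (a+b) (a+b+b+dim_col D)"
  "dim_row (gen a b C D) = a+b" "dim_col (gen a b C D) = a+b+b+dim_col D"
  by (auto simp: gen_def)

lemma append_rows_index:
  assumes "A \<in> carrier_mat nr1 nc" "B \<in> carrier_mat nr2 nc" "i < nr1 + nr2" "j < nc"
  shows "(A @\<^sub>r B) $$ (i,j) = (if i < nr1 then A $$ (i,j) else B $$ (i - nr1, j))"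
  using assms unfolding append_rows_def by auto

lemma lift_gen:
  assumes C: "C \<in> carrier_mat r N"
  shows "lift C = row_sp (gen r 0 (0\<^sub>m r 0) C)"
proof -
  have "hcat (1\<^sub>m (dim_row C)) C = gen r 0 (0\<^sub>m r 0) C"
    by (rule eq_matI) (use C in \<open>auto simp: hcat_def gen_def\<close>)
  then show ?thesis unfolding lift_def by simp
qed

lemma Ek_gen:
  assumes C: "C \<in> carrier_mat a b" and D: "D \<in> carrier_mat (a+b) N"
  shows "Ek_space a b C D = row_sp (gen a b C D)"
proof -
  let ?T = "hcat (hcat (hcat (1\<^sub>m a) C) (0\<^sub>m a b)) (top_rows a D)"
  let ?B = "hcat (hcat (hcat (0\<^sub>m b a) (0\<^sub>m b b)) (1\<^sub>m b)) (bottom_rows b D)"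
  have T: "?T \<in> carrier_mat a (a+b+b+N)" using C D by (simp add: hcat_def top_rows_def)
  have Bm: "?B \<in> carrier_mat b (a+b+b+N)" using C D by (simp add: hcat_def bottom_rows_def)
  have "?T @\<^sub>r ?B = gen a b C D"
  proof (rule eq_matI)
    fix i j assume ij: "i < dim_row (gen a b C D)" "j < dim_col (gen a b C D)"
    then have i: "i < a + b" and j: "j < a+b+b+N" using D by auto
    show "(?T @\<^sub>r ?B) $$ (i,j) = gen a b C D $$ (i,j)"
      unfolding append_rows_index[OF T Bm i j]
      using i j C D by (auto simp: hcat_def top_rows_def bottom_rows_def gen_def)
  qed (use carrier_matD[OF carrier_append_rows[OF T Bm]] D in auto)
  then show ?thesis unfolding Ek_space_def by simp
qed

context vec_space begin

lemma sum_span: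
  assumes S: "S \<subseteq> carrier_vec n" and T: "T \<subseteq> carrier_vec n"
  shows "sub_sum (span S) (span T) = span (S \<union> T)"
proof
  have ST: "S \<union> T \<subseteq> carrier_vec n" using S T by simp
  show "sub_sum (span S) (span T) \<subseteq> span (S \<union> T)"
  proof
    fix x assume "x \<in> sub_sum (span S) (span T)"
    then obtain u v where x: "x = u + v" "u \<in> span S" "v \<in> span T" unfolding sub_sum_def by blast
    have "u \<in> span (S \<union> T)" "v \<in> span (S \<union> T)" using x span_mono'[of S "S \<union> T"] span_mono'[of T "S \<union> T"] by auto
    then show "x \<in> span (S \<union> T)" using x span_add_closed[OF ST] by simp
  qed
  have eq: "sub_sum (span S) (span T) = subspace_sum (span S) (span T)"
    unfolding sub_sum_def submodule_sum_def by auto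
  have sS: "subspace class_ring (span S) V" using span_is_subspace S by simp
  have sT: "subspace class_ring (span T) V" using span_is_subspace T by simp
  have sub: "subspace class_ring (subspace_sum (span S) (span T)) V" using sum_is_subspace[OF sS sT] .
  have 1: "span S \<subseteq> subspace_sum (span S) (span T)" using in_sum_vs[OF sS sT] .
  have 2: "span T \<subseteq> subspace_sum (span S) (span T)" using in_sum_vs[OF sT sS] vsum_comm[OF sS sT] by simp
  have "S \<union> T \<subseteq> subspace_sum (span S) (span T)" using 1 2 own_span[OF S] own_span[OF T] by blast
  then have "span (S \<union> T) \<subseteq> subspace_sum (span S) (span T)"
    using span_is_subset[of "S \<union> T"] sub unfolding subspace_def by simp
  then show "span (S \<union> T) \<subseteq> sub_sum (span S) (span T)" using eq by simp
qed

lemma sd_subadd: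
  assumes "finite S" "S \<subseteq> carrier_vec n" "finite T" "T \<subseteq> carrier_vec n"
  shows "sub_dim n (span (S \<union> T)) \<le> sub_dim n (span S) + sub_dim n (span T)"
proof -
  obtain BS where BS: "finite BS" "BS \<subseteq> span S" "span BS = span S" "card BS = sub_dim n (span S)"
    using basis_of_span[OF assms(1,2)] by metis
  obtain BT where BT: "finite BT" "BT \<subseteq> span T" "span BT = span T" "card BT = sub_dim n (span T)"
    using basis_of_span[OF assms(3,4)] by metis
  have c: "BS \<union> BT \<subseteq> carrier_vec n" using BS(2) BT(2) span_carrier assms by blast
  have "S \<subseteq> span (BS \<union> BT)" using own_span[OF assms(2)] BS(3) span_mono'[of BS "BS \<union> BT"] by auto
  moreover have "T \<subseteq> span (BS \<union> BT)" using own_span[OF assms(4)] BT(3) span_mono'[of BT "BS \<union> BT"] by auto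
  ultimately have "S \<union> T \<subseteq> span (BS \<union> BT)" by simp
  then have "sub_dim n (span (S \<union> T)) \<le> sub_dim n (span (BS \<union> BT))"
    using sd_mono[of "S \<union> T" "BS \<union> BT"] assms BS(1) BT(1) c by simp
  also have "\<dots> \<le> card (BS \<union> BT)" using sd_le_card[of "BS \<union> BT"] BS(1) BT(1) c by simp
  also have "\<dots> \<le> card BS + card BT" by (rule card_Un_le)
  finally show ?thesis using BS(4) BT(4) by simp
qed

end

lemma mrank_cols_subset:
  fixes A :: "'a::field mat"
  assumes A: "A \<in> carrier_mat m N" and B: "B \<in> carrier_mat m N'"
    and sub: "set (cols B) \<subseteq> vspan m (set (cols A))"
  shows "mrank B \<le> mrank A"
proof -
  have fa: "finite (set (cols A))" "set (cols A) \<subseteq> carrier_vec m" using A by (auto simp: cols_def)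
  have fb: "finite (set (cols B))" "set (cols B) \<subseteq> carrier_vec m" using B by (auto simp: cols_def)
  show ?thesis using vec_space.sd_mono[OF fb fa sub] mrank_eq[OF A] mrank_eq[OF B] by simp
qed

lemma mrank_rows_subset:
  fixes A :: "'a::field mat"
  assumes A: "A \<in> carrier_mat m N" and B: "B \<in> carrier_mat m' N"
    and sub: "set (rows B) \<subseteq> vspan N (set (rows A))"
  shows "mrank B \<le> mrank A"
proof -
  have "mrank (B\<^sup>T) \<le> mrank (A\<^sup>T)"
    by (rule mrank_cols_subset[of _ N m _ m']) (use A B sub in auto)
  then show ?thesis using mrank_transpose[OF A] mrank_transpose[OF B] by simp
qed

lemma mrank_block:
  fixes H :: "'a::field mat"
  assumes H: "H \<in> carrier_mat m N" and "i0 + m' \<le> m" "j0 + N' \<le> N"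
  shows "mrank (mat m' N' (\<lambda>(i,j). H $$ (i + i0, j + j0))) \<le> mrank H"
proof -
  define H1 where "H1 = mat m' N (\<lambda>(i,j). H $$ (i + i0, j))"
  have H1: "H1 \<in> carrier_mat m' N" unfolding H1_def by simp
  have r1: "set (rows H1) \<subseteq> set (rows H)"
  proof
    fix w assume "w \<in> set (rows H1)"
    then obtain i where i: "i < m'" "w = row H1 i" using H1 by (auto simp: rows_def)
    have "w = row H (i + i0)" using i H H1 by (auto simp: H1_def row_def)
    then show "w \<in> set (rows H)" using i assms by (auto simp: rows_def)
  qed
  have fa: "set (rows H) \<subseteq> carrier_vec N" using H by (auto simp: rows_def)
  have 1: "mrank H1 \<le> mrank H"
    using mrank_rows_subset[OF H H1] r1 vec_space.own_span[OF fa] by blast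
  have c1: "set (cols (mat m' N' (\<lambda>(i,j). H $$ (i + i0, j + j0)))) \<subseteq> set (cols H1)"
  proof
    fix w assume "w \<in> set (cols (mat m' N' (\<lambda>(i,j). H $$ (i + i0, j + j0))))"
    then obtain j where j: "j < N'" "w = col (mat m' N' (\<lambda>(i,j). H $$ (i + i0, j + j0))) j" by (auto simp: cols_def)
    have "w = col H1 (j + j0)" using j assms by (auto simp: H1_def)
    then show "w \<in> set (cols H1)" using j assms H1 by (auto simp: cols_def)
  qed
  have fb: "set (cols H1) \<subseteq> carrier_vec m'" using H1 by (auto simp: cols_def)
  have 2: "mrank (mat m' N' (\<lambda>(i,j). H $$ (i + i0, j + j0))) \<le> mrank H1"
    using mrank_cols_subset[OF H1, of _ N'] c1 vec_space.own_span[OF fb] by auto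
  show ?thesis using 1 2 by simp
qed

lemma dist_lower:
  fixes G1 G2 H :: "'a::field mat"
  assumes G1: "G1 \<in> carrier_mat r n" and G2: "G2 \<in> carrier_mat r n" and H: "H \<in> carrier_mat m n"
    and p: "\<forall>j<r. p j < n"
    and piv: "\<forall>i<r. \<forall>j<r. G1 $$ (i, p j) = (if i = j then 1 else 0)"
    and Hz: "\<forall>i<m. \<forall>j<r. H $$ (i, p j) = 0"
    and Hin: "set (rows H) \<subseteq> vspan n (set (rows G1) \<union> set (rows G2))"
  shows "r + sub_dim n (vspan n (set (rows H))) \<le> sub_dim n (vspan n (set (rows G1) \<union> set (rows G2)))"
proof -
  have c1: "set (rows G1) \<subseteq> carrier_vec n" "set (rows G2) \<subseteq> carrier_vec n" "set (rows H) \<subseteq> carrier_vec n"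
    using G1 G2 H by (auto simp: rows_def)
  have Tz: "\<forall>t\<in>set (rows H). \<forall>j<r. t $ p j = 0" using Hz H p by (auto simp: rows_def)
  have "r + sub_dim n (vspan n (set (rows H))) \<le> sub_dim n (vspan n (set (rows G1) \<union> set (rows H)))"
    using vec_space.key[OF G1 p piv _ c1(3) Tz] by simp
  also have "\<dots> \<le> sub_dim n (vspan n (set (rows G1) \<union> set (rows G2)))"
  proof (rule vec_space.sd_mono)
    show "set (rows G1) \<union> set (rows H) \<subseteq> vspan n (set (rows G1) \<union> set (rows G2))"
      using Hin vec_space.own_span[of "set (rows G1) \<union> set (rows G2)" n] c1 by auto
  qed (use c1 in auto)
  finally show ?thesis .
qed




lemma (in vec_space) zero_in_span': "0\<^sub>v n \<in> span S"
  unfolding span_def by (rule CollectI, intro exI[of _ "\<lambda>_. 0"] exI[of _ "{}"]) (simp add: lincomb_def)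

lemma gen_piv: "i < a+b \<Longrightarrow> j < a+b \<Longrightarrow>
  gen a b C D $$ (i, if j < a then j else j + b) = (if i = j then 1 else 0)"
  by (auto simp: gen_def)

lemma row_minus_mat: "A \<in> carrier_mat m N \<Longrightarrow> B \<in> carrier_mat m N \<Longrightarrow> i < m \<Longrightarrow>
  row (A - B) i = row A i - row B i"
  by (rule eq_vecI) auto

lemma sd_rows_mrank: "H \<in> carrier_mat m N \<Longrightarrow> sub_dim N (vspan N (set (rows H))) = mrank H"
  using mrank_eq[of "H\<^sup>T" N m] mrank_transpose[of H m N] by simp

lemma same_k:
  fixes C C' D D' :: "'a::field mat"
  assumes C: "C \<in> carrier_mat a b" "C' \<in> carrier_mat a b"
    and D: "D \<in> carrier_mat (a+b) N" "D' \<in> carrier_mat (a+b) N"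
    and n: "n = a+b+b+N"
  shows "a + b + mrank (gen a b C' D' - gen a b C D) \<le>
           sub_dim n (vspan n (set (rows (gen a b C D)) \<union> set (rows (gen a b C' D'))))"
    "mrank (C' - C) \<le> mrank (gen a b C' D' - gen a b C D)"
    "mrank (D' - D) \<le> mrank (gen a b C' D' - gen a b C D)"
proof -
  let ?G1 = "gen a b C D" and ?G2 = "gen a b C' D'"
  let ?H = "?G2 - ?G1"
  have G1: "?G1 \<in> carrier_mat (a+b) n" by (rule carrier_matI) (use D n in auto)
  have G2: "?G2 \<in> carrier_mat (a+b) n" by (rule carrier_matI) (use D n in auto)
  have H: "?H \<in> carrier_mat (a+b) n" by (rule carrier_matI) (use G1 G2 in auto)
  define p where "p j = (if j < a then j else j + b)" for j
  have p: "\<forall>j<a+b. p j < n" using n by (auto simp: p_def)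
  have piv: "\<forall>i<a+b. \<forall>j<a+b. ?G1 $$ (i, p j) = (if i = j then 1 else 0)"
    using gen_piv unfolding p_def by blast
  have Hz: "\<forall>i<a+b. \<forall>j<a+b. ?H $$ (i, p j) = 0"
    using gen_piv[of _ a b _ C' D'] gen_piv[of _ a b _ C D] p G1 G2 unfolding p_def by auto
  have c1: "set (rows ?G1) \<union> set (rows ?G2) \<subseteq> carrier_vec n" using G1 G2 by (auto simp: rows_def)
  have Hin: "set (rows ?H) \<subseteq> vspan n (set (rows ?G1) \<union> set (rows ?G2))"
  proof
    fix w assume "w \<in> set (rows ?H)"
    then obtain i where i: "i < a+b" "w = row ?H i" using H by (auto simp: rows_def)
    have w: "w = row ?G2 i - row ?G1 i" using row_minus_mat[OF G2 G1 i(1)] i by simp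
    have "row ?G2 i \<in> vspan n (set (rows ?G1) \<union> set (rows ?G2))"
         "row ?G1 i \<in> vspan n (set (rows ?G1) \<union> set (rows ?G2))"
      using vec_space.own_span[OF c1] i G1 G2 by (auto simp: rows_def)
    then show "w \<in> vspan n (set (rows ?G1) \<union> set (rows ?G2))"
      using vec_space.span_minus_closed[OF c1] w by simp
  qed
  show "a + b + mrank ?H \<le> sub_dim n (vspan n (set (rows ?G1) \<union> set (rows ?G2)))"
    using dist_lower[OF G1 G2 H p piv Hz Hin] sd_rows_mrank[OF H] by simp
  have "C' - C = mat a b (\<lambda>(i,j). ?H $$ (i + 0, j + a))"
    by (rule eq_matI) (use C D n in \<open>auto simp: gen_def\<close>)
  then show "mrank (C' - C) \<le> mrank ?H" using mrank_block[OF H, of 0 a a b] n by simp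
  have "D' - D = mat (a+b) N (\<lambda>(i,j). ?H $$ (i + 0, j + (a+b+b)))"
    by (rule eq_matI) (use C D n in \<open>auto simp: gen_def\<close>)
  then show "mrank (D' - D) \<le> mrank ?H" using mrank_block[OF H, of 0 "a+b" "a+b+b" N] n by simp
qed

lemma diff_k:
  fixes C C' D D' :: "'a::field mat"
  assumes C: "C \<in> carrier_mat a1 b1" "C' \<in> carrier_mat a2 b2"
    and D: "D \<in> carrier_mat r N1" "D' \<in> carrier_mat r N2"
    and r: "a1 + b1 = r" "a2 + b2 = r" and b: "b1 < b2"
    and n: "n = a1+b1+b1+N1" "n = a2+b2+b2+N2"
  shows "r + (b2 - b1) \<le>
           sub_dim n (vspan n (set (rows (gen a1 b1 C D)) \<union> set (rows (gen a2 b2 C' D'))))"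
proof -
  let ?G1 = "gen a1 b1 C D" and ?G2 = "gen a2 b2 C' D'"
  have G1: "?G1 \<in> carrier_mat r n" by (rule carrier_matI) (use D n r in auto)
  have G2: "?G2 \<in> carrier_mat r n" by (rule carrier_matI) (use D n r in auto)
  define H where "H = mat (b2 - b1) n (\<lambda>(i,j). ?G2 $$ (i + a2 + b1, j))"
  have H: "H \<in> carrier_mat (b2 - b1) n" unfolding H_def by simp
  define p where "p j = (if j < a1 then j else j + b1)" for j
  have p: "\<forall>j<r. p j < n" using n r by (auto simp: p_def)
  have piv: "\<forall>i<r. \<forall>j<r. ?G1 $$ (i, p j) = (if i = j then 1 else 0)"
    using gen_piv[of _ a1 b1 _ C D] r unfolding p_def by auto
  have Hz: "\<forall>i<b2-b1. \<forall>j<r. H $$ (i, p j) = 0"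
    using r n b p unfolding H_def p_def by (auto simp: gen_def)
  have c1: "set (rows ?G1) \<union> set (rows ?G2) \<subseteq> carrier_vec n" using G1 G2 by (auto simp: rows_def)
  have Hin: "set (rows H) \<subseteq> vspan n (set (rows ?G1) \<union> set (rows ?G2))"
  proof
    fix w assume "w \<in> set (rows H)"
    then obtain i where i: "i < b2 - b1" "w = row H i" using H by (auto simp: rows_def)
    have w: "w = row ?G2 (i + a2 + b1)" unfolding i(2) H_def by (rule eq_vecI) (use i G2 r b in auto)
    have "i + a2 + b1 < r" using i r b by simp
    then have "w \<in> set (rows ?G1) \<union> set (rows ?G2)" using w G2 by (auto simp: rows_def)
    then show "w \<in> vspan n (set (rows ?G1) \<union> set (rows ?G2))"
      using vec_space.own_span[OF c1] by auto
  qed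
  have 1: "r + sub_dim n (vspan n (set (rows H))) \<le> sub_dim n (vspan n (set (rows ?G1) \<union> set (rows ?G2)))"
    using dist_lower[OF G1 G2 H p piv Hz Hin] .
  define q where "q j = j + r + b1" for j
  have q: "\<forall>j<b2-b1. q j < n" using n r b by (auto simp: q_def)
  have pivH: "\<forall>i<b2-b1. \<forall>j<b2-b1. H $$ (i, q j) = (if i = j then 1 else 0)"
    using n r b q unfolding H_def q_def by (auto simp: gen_def)
  have cH: "set (rows H) \<subseteq> carrier_vec n" using H by (auto simp: rows_def)
  have "b2 - b1 + sub_dim n (vspan n ({} :: 'a vec set)) \<le> sub_dim n (vspan n (set (rows H) \<union> {}))"
    using vec_space.key[OF H q pivH, of "{}"] by simp
  then have "b2 - b1 \<le> sub_dim n (vspan n (set (rows H)))" by simp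
  then show ?thesis using 1 by simp
qed

lemma attain_upper:
  fixes D D' :: "'a::field mat"
  assumes D: "D \<in> carrier_mat r N" "D' \<in> carrier_mat r N" and n: "n = r + N"
  shows "sub_dim n (vspan n (set (rows (gen r 0 Z D)) \<union> set (rows (gen r 0 Z D')))) \<le> r + mrank (D' - D)"
proof -
  let ?G1 = "gen r 0 Z D" and ?G2 = "gen r 0 Z D'"
  let ?H = "?G2 - ?G1"
  have G1: "?G1 \<in> carrier_mat r n" by (rule carrier_matI) (use D n in auto)
  have G2: "?G2 \<in> carrier_mat r n" by (rule carrier_matI) (use D n in auto)
  have H: "?H \<in> carrier_mat r n" by (rule carrier_matI) (use G1 G2 in auto)
  have c1: "set (rows ?G1) \<subseteq> carrier_vec n" "set (rows ?G2) \<subseteq> carrier_vec n" "set (rows ?H) \<subseteq> carrier_vec n"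
    using G1 G2 H by (auto simp: rows_def)
  have c2: "set (rows ?G1) \<union> set (rows ?H) \<subseteq> carrier_vec n" using c1 by simp
  have sub: "set (rows ?G1) \<union> set (rows ?G2) \<subseteq> vspan n (set (rows ?G1) \<union> set (rows ?H))"
  proof -
    have "set (rows ?G2) \<subseteq> vspan n (set (rows ?G1) \<union> set (rows ?H))"
    proof
      fix w assume "w \<in> set (rows ?G2)"
      then obtain i where i: "i < r" "w = row ?G2 i" using G2 by (auto simp: rows_def)
      have w: "w = row ?G1 i + row ?H i" unfolding i(2) row_minus_mat[OF G2 G1 i(1)]
        by (rule eq_vecI) (use i G1 G2 D in auto)
      have "row ?G1 i \<in> vspan n (set (rows ?G1) \<union> set (rows ?H))"
           "row ?H i \<in> vspan n (set (rows ?G1) \<union> set (rows ?H))"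
        using vec_space.own_span[OF c2] i G1 H by (auto simp: rows_def)
      then show "w \<in> vspan n (set (rows ?G1) \<union> set (rows ?H))"
        using vec_space.span_add_closed[OF c2] w by simp
    qed
    then show ?thesis using vec_space.own_span[OF c2] by auto
  qed
  have "sub_dim n (vspan n (set (rows ?G1) \<union> set (rows ?G2))) \<le> sub_dim n (vspan n (set (rows ?G1) \<union> set (rows ?H)))"
    using vec_space.sd_mono[OF _ _ _ c2 sub] c1 by simp
  also have "\<dots> \<le> sub_dim n (vspan n (set (rows ?G1))) + sub_dim n (vspan n (set (rows ?H)))"
    using vec_space.sd_subadd[OF _ c1(1) _ c1(3)] by simp
  also have "sub_dim n (vspan n (set (rows ?G1))) \<le> card (set (rows ?G1))"
    using vec_space.sd_le_card[OF _ c1(1)] by simp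
  also have "\<dots> \<le> r" using card_length[of "rows ?G1"] G1 by simp
  also have "sub_dim n (vspan n (set (rows ?H))) = mrank ?H" using sd_rows_mrank[OF H] .
  also have "mrank ?H \<le> mrank (D' - D)"
  proof (rule mrank_cols_subset[OF _ H])
    have DD: "D' - D \<in> carrier_mat r N" by (rule carrier_matI) (use D in auto)
    then show "D' - D \<in> carrier_mat r N" .
    have cD: "set (cols (D' - D)) \<subseteq> carrier_vec r" using carrier_matD(2)[OF D(1)] col_carrier_vec[OF _ DD] by (auto simp: cols_def)
    show "set (cols ?H) \<subseteq> vspan r (set (cols (D' - D)))"
    proof
      fix w assume "w \<in> set (cols ?H)"
      then obtain j where j: "j < n" "w = col ?H j" using H by (auto simp: cols_def)
      show "w \<in> vspan r (set (cols (D' - D)))"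
      proof (cases "j < r")
        case True
        then have "w = 0\<^sub>v r" using j D n by (auto simp: gen_def)
        then show ?thesis using vec_space.zero_in_span' by simp
      next
        case False
        then have "w = col (D' - D) (j - r)" using j D n by (auto simp: gen_def)
        moreover have "col (D' - D) (j - r) \<in> set (cols (D' - D))" using False j n D by (auto simp: cols_def)
        ultimately show ?thesis using vec_space.own_span[OF cD] by auto
      qed
    qed
  qed
  finally show ?thesis by simp
qed




lemma gen_cm: "k*d \<le> r \<Longrightarrow> r \<le> n - r \<Longrightarrow> D \<in> carrier_mat r (n - r - k*d) \<Longrightarrow>
   gen (r - k*d) (k*d) C D \<in> carrier_mat r n"
  by (rule carrier_matI) auto

lemma LB:
  fixes C C' D D' :: "'a::field mat"
  assumes kl: "k \<le> l" and kd: "k*d \<le> r" and ld: "l*d \<le> r" and rn: "r \<le> n - r" and d: "1 \<le> d"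
    and C: "C \<in> carrier_mat (r-k*d) (k*d)" and C': "C' \<in> carrier_mat (r-l*d) (l*d)"
    and D: "D \<in> carrier_mat r (n-r-k*d)" and D': "D' \<in> carrier_mat r (n-r-l*d)"
    and ne: "(k,C,D) \<noteq> (l,C',D')"
    and pC: "k = l \<Longrightarrow> C \<noteq> C' \<Longrightarrow> d \<le> mrank (C' - C)"
    and pD: "k = l \<Longrightarrow> D \<noteq> D' \<Longrightarrow> d \<le> mrank (D' - D)"
  shows "r + d \<le> sub_dim n (vspan n (set (rows (gen (r-k*d) (k*d) C D)) \<union> set (rows (gen (r-l*d) (l*d) C' D'))))"
proof (cases "k = l")
  case True
  have r: "r - k*d + k*d = r" using kd by simp
  have D1: "D \<in> carrier_mat (r - k*d + k*d) (n-r-k*d)" using D r by simp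
  have D2: "D' \<in> carrier_mat (r - k*d + k*d) (n-r-k*d)" using D' r True by simp
  have nn: "n = r - k*d + k*d + k*d + (n-r-k*d)" using kd rn by simp
  note sk = same_k[OF C _ D1 D2 nn, of C']
  have C2: "C' \<in> carrier_mat (r-k*d) (k*d)" using C' True by simp
  have H: "d \<le> mrank (gen (r-k*d) (k*d) C' D' - gen (r-k*d) (k*d) C D)"
  proof (cases "C = C'")
    case True
    then have "D \<noteq> D'" using ne \<open>k = l\<close> by simp
    then show ?thesis using pD[OF \<open>k = l\<close>] sk(3)[OF C2] by simp
  next
    case False
    then show ?thesis using pC[OF \<open>k = l\<close>] sk(2)[OF C2] by simp
  qed
  show ?thesis using sk(1)[OF C2] H r True by simp
next
  case False
  then have kl': "k + 1 \<le> l" using kl by simp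
  have "(k+1)*d \<le> l*d" using kl' by (rule mult_le_mono1)
  then have dd: "k*d + d \<le> l*d" by simp
  have "r + (l*d - k*d) \<le> sub_dim n (vspan n (set (rows (gen (r-k*d) (k*d) C D)) \<union> set (rows (gen (r-l*d) (l*d) C' D'))))"
    by (rule diff_k[OF C C' D D']) (use kd ld rn dd d kl' in auto)
  then show ?thesis using dd by simp
qed

lemma mrd_pair:
  fixes X :: "'a::{field,finite} mat set"
  assumes X: "is_MRD m N d X" and C: "C \<in> X" "C' \<in> X" "C \<noteq> C'"
  shows "d \<le> mrank (C - C')"
proof -
  let ?S = "{rank_dist C D | C D. C \<in> X \<and> D \<in> X \<and> C \<noteq> D}"
  have sub: "X \<subseteq> carrier_mat m N" using X unfolding is_MRD_def by simp
  have "?S \<subseteq> {..N}"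
  proof
    fix x assume "x \<in> ?S"
    then obtain A B where AB: "x = rank_dist A B" "A \<in> X" "B \<in> X" by blast
    have "A - B \<in> carrier_mat m N" using AB sub by (intro carrier_matI) auto
    then show "x \<in> {..N}" using vec_space.rank_le_nc[of "A - B" m N] AB
      unfolding rank_dist_def mrank_def by auto
  qed
  then have fin: "finite ?S" using finite_subset by blast
  have "rank_dist C C' \<in> ?S" using C by blast
  then have "Min ?S \<le> rank_dist C C'" using fin by simp
  then show ?thesis using X unfolding is_MRD_def min_rank_dist_def rank_dist_def by simp
qed

lemma mrd_attain:
  fixes X :: "'a::{field,finite} mat set"
  assumes X: "is_MRD m N d X" and C: "C \<in> X" "C' \<in> X" "C \<noteq> C'"
  shows "\<exists>A B. A \<in> X \<and> B \<in> X \<and> A \<noteq> B \<and> mrank (A - B) = d"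
proof -
  let ?S = "{rank_dist C D | C D. C \<in> X \<and> D \<in> X \<and> C \<noteq> D}"
  have sub: "X \<subseteq> carrier_mat m N" using X unfolding is_MRD_def by simp
  have "?S \<subseteq> {..N}"
  proof
    fix x assume "x \<in> ?S"
    then obtain A B where AB: "x = rank_dist A B" "A \<in> X" "B \<in> X" by blast
    have "A - B \<in> carrier_mat m N" using AB sub by (intro carrier_matI) auto
    then show "x \<in> {..N}" using vec_space.rank_le_nc[of "A - B" m N] AB
      unfolding rank_dist_def mrank_def by auto
  qed
  then have fin: "finite ?S" using finite_subset by blast
  have ne: "?S \<noteq> {}" using C by blast
  have "Min ?S \<in> ?S" using Min_in[OF fin ne] .
  then obtain A B where "A \<in> X" "B \<in> X" "A \<noteq> B" "rank_dist A B = Min ?S" by auto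
  then show ?thesis using X unfolding is_MRD_def min_rank_dist_def rank_dist_def by auto
qed

theorem proposition1:
  fixes n r d :: nat
    and M :: "'a::{field,finite} mat set"
    and Cs Ds :: "nat \<Rightarrow> 'a mat set"
  assumes "1 \<le> d" and "d \<le> r" and "2 * r \<le> n"
    and "is_MRD r (n - r) d M"
    and "card M = card (UNIV :: 'a set) ^ ((n - r) * (r - d + 1))"
    and "\<And>k. 1 \<le> k \<Longrightarrow> k \<le> r div d - 1 \<Longrightarrow> is_MRD (r - k * d) (k * d) d (Cs k)"
    and "Cs (r div d) = {0\<^sub>m (r - (r div d) * d) ((r div d) * d)}"
    and "\<And>k. 1 \<le> k \<Longrightarrow> k \<le> r div d \<Longrightarrow> k \<le> (n - r) div d - 1 \<Longrightarrow>
           is_MRD r (n - r - k * d) d (Ds k)"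
    and "Ds ((n - r) div d) = {0\<^sub>m r (n - r - ((n - r) div d) * d)}"
  shows "min_inj_dist n
          ({lift C | C. C \<in> M} \<union>
           (\<Union>k\<in>{1..r div d}. {Ek_space (r - k * d) (k * d) C D | C D. C \<in> Cs k \<and> D \<in> Ds k}))
         = d"
proof -
  define E where "E = ({lift C | C. C \<in> M} \<union>
           (\<Union>k\<in>{1..r div d}. {Ek_space (r - k * d) (k * d) C D | C D. C \<in> Cs k \<and> D \<in> Ds k}))"
  define CC where "CC k = (if k = 0 then {0\<^sub>m r 0} else Cs k)" for k
  define DD where "DD k = (if k = 0 then M else Ds k)" for k
  define G where "G k C D = gen (r - k*d) (k*d) C D" for k and C D :: "'a mat"
  define Sp where "Sp k C D = vspan n (set (rows (G k C D)))" for k C D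
  have d1: "1 \<le> d" using assms(1) .
  have rn: "r \<le> n - r" using assms(3) by simp
  have kdr: "k*d \<le> r" if "k \<le> r div d" for k
  proof -
    have "k*d \<le> (r div d)*d" using that by (rule mult_le_mono1)
    also have "\<dots> \<le> r" by (metis div_mult_mod_eq le_add1)
    finally show ?thesis .
  qed
  have rdiv: "r div d \<le> (n - r) div d" using rn by (rule div_le_mono)
  have Cdim: "C \<in> carrier_mat (r - k*d) (k*d)" if k: "k \<le> r div d" and C: "C \<in> CC k" for k C
  proof (cases "k = 0")
    case True then show ?thesis using C by (simp add: CC_def)
  next
    case False
    show ?thesis
    proof (cases "k \<le> r div d - 1")
      case True
      then have "is_MRD (r - k * d) (k * d) d (Cs k)" using assms(6) False by simp
      then show ?thesis using C False unfolding is_MRD_def CC_def by auto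
    next
      case False': False
      then have "k = r div d" using k by simp
      then show ?thesis using C False assms(7) unfolding CC_def by auto
    qed
  qed
  have Ddim: "D \<in> carrier_mat r (n - r - k*d)" if k: "k \<le> r div d" and D: "D \<in> DD k" for k D
  proof (cases "k = 0")
    case True then show ?thesis using D assms(4) by (simp add: DD_def is_MRD_def subset_iff)
  next
    case False
    show ?thesis
    proof (cases "k \<le> (n - r) div d - 1")
      case True
      then have "is_MRD r (n - r - k * d) d (Ds k)" using assms(8) False k by simp
      then show ?thesis using D False unfolding is_MRD_def DD_def by auto
    next
      case False': False
      then have "k = (n - r) div d" using k rdiv False by simp
      then show ?thesis using D False assms(9) unfolding DD_def by auto
    qed
  qed
  have pC: "d \<le> mrank (C' - C)" if k: "k \<le> r div d" and C: "C \<in> CC k" "C' \<in> CC k" "C \<noteq> C'" for k C C'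
  proof (cases "k = 0")
    case True then show ?thesis using C by (simp add: CC_def)
  next
    case False
    show ?thesis
    proof (cases "k \<le> r div d - 1")
      case True
      then have "is_MRD (r - k * d) (k * d) d (Cs k)" using assms(6) False by simp
      then show ?thesis using mrd_pair[of _ _ d "Cs k" C' C] C False unfolding CC_def by auto
    next
      case False': False
      then have "k = r div d" using k by simp
      then show ?thesis using C False assms(7) unfolding CC_def by auto
    qed
  qed
  have pD: "d \<le> mrank (D' - D)" if k: "k \<le> r div d" and D: "D \<in> DD k" "D' \<in> DD k" "D \<noteq> D'" for k D D'
  proof (cases "k = 0")
    case True then show ?thesis using D mrd_pair[OF assms(4), of D' D] by (simp add: DD_def)
  next
    case False
    show ?thesis
    proof (cases "k \<le> (n - r) div d - 1")
      case True
      then have "is_MRD r (n - r - k * d) d (Ds k)" using assms(8) False k by simp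
      then show ?thesis using mrd_pair[of _ _ d "Ds k" D' D] D False unfolding DD_def by auto
    next
      case False': False
      then have "k = (n - r) div d" using k rdiv False by simp
      then show ?thesis using D False assms(9) unfolding DD_def by auto
    qed
  qed
  have GC: "G k C D \<in> carrier_mat r n" if "k \<le> r div d" "D \<in> DD k" for k C D
    unfolding G_def using gen_cm[OF kdr[OF that(1)] rn Ddim[OF that]] .
  have Rc: "set (rows (G k C D)) \<subseteq> carrier_vec n" if "k \<le> r div d" "D \<in> DD k" for k C D
    using GC[OF that, of C] by (auto simp: rows_def)
  have inE: "\<exists>k C D. k \<le> r div d \<and> C \<in> CC k \<and> D \<in> DD k \<and> U = Sp k C D" if U: "U \<in> E" for U
  proof -
    have "U \<in> {lift C | C. C \<in> M} \<or> (\<exists>k\<in>{1..r div d}. U \<in> {Ek_space (r - k * d) (k * d) C D | C D. C \<in> Cs k \<and> D \<in> Ds k})"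
      using U unfolding E_def by blast
    then show ?thesis
    proof
      assume "U \<in> {lift C | C. C \<in> M}"
      then obtain C where C: "C \<in> M" "U = lift C" by blast
      have Cc: "C \<in> carrier_mat r (n - r)" using C assms(4) by (auto simp: is_MRD_def)
      have "U = row_sp (gen r 0 (0\<^sub>m r 0) C)" using lift_gen[OF Cc] C by simp
      also have "\<dots> = Sp 0 (0\<^sub>m r 0) C" unfolding Sp_def G_def row_sp_eq using Cc rn by simp
      finally show ?thesis using C by (intro exI[of _ 0] exI[of _ "0\<^sub>m r 0"] exI[of _ C]) (simp add: CC_def DD_def)
    next
      assume "\<exists>k\<in>{1..r div d}. U \<in> {Ek_space (r - k * d) (k * d) C D | C D. C \<in> Cs k \<and> D \<in> Ds k}"
      then obtain k C D where k: "1 \<le> k" "k \<le> r div d" and CD: "C \<in> Cs k" "D \<in> Ds k"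
        "U = Ek_space (r - k * d) (k * d) C D" by auto
      have CC': "C \<in> CC k" "D \<in> DD k" using CD k by (auto simp: CC_def DD_def)
      have Cc: "C \<in> carrier_mat (r - k*d) (k*d)" using Cdim[OF k(2) CC'(1)] .
      have Dc: "D \<in> carrier_mat (r - k*d + k*d) (n - r - k*d)" using Ddim[OF k(2) CC'(2)] kdr[OF k(2)] by simp
      have "U = row_sp (G k C D)" using Ek_gen[OF Cc Dc] CD unfolding G_def by simp
      also have "\<dots> = Sp k C D" unfolding Sp_def row_sp_eq using carrier_matD[OF GC[OF k(2) CC'(2), of C]] by simp
      finally show ?thesis using k CC' by blast
    qed
  qed
  have up: "sub_dim n (Sp k C D) \<le> r" if "k \<le> r div d" "D \<in> DD k" for k C D
  proof -
    have "sub_dim n (Sp k C D) \<le> card (set (rows (G k C D)))"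
      unfolding Sp_def using vec_space.sd_le_card[OF _ Rc[OF that]] by simp
    also have "\<dots> \<le> length (rows (G k C D))" by (rule card_length)
    also have "\<dots> = r" using carrier_matD[OF GC[OF that, of C]] by simp
    finally show ?thesis .
  qed
  have sumeq: "sub_sum (Sp k C D) (Sp l C' D') = vspan n (set (rows (G k C D)) \<union> set (rows (G l C' D')))"
    if "k \<le> r div d" "D \<in> DD k" "l \<le> r div d" "D' \<in> DD l" for k C D l C' D'
    unfolding Sp_def using vec_space.sum_span[OF Rc[OF that(1,2)] Rc[OF that(3,4)]] .
  have LB1: "r + d \<le> sub_dim n (vspan n (set (rows (G k C D)) \<union> set (rows (G l C' D'))))"
    if k: "k \<le> r div d" "C \<in> CC k" "D \<in> DD k" and l: "l \<le> r div d" "C' \<in> CC l" "D' \<in> DD l"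
     and ne: "(k,C,D) \<noteq> (l,C',D')" and kl: "k \<le> l" for k C D l C' D'
    unfolding G_def
    by (rule LB[OF kl kdr[OF k(1)] kdr[OF l(1)] rn d1 Cdim[OF k(1,2)] Cdim[OF l(1,2)] Ddim[OF k(1,3)] Ddim[OF l(1,3)] ne])
       (use pC[OF k(1,2)] pD[OF k(1,3)] l in auto)
  have LB2: "r + d \<le> sub_dim n (sub_sum (Sp k C D) (Sp l C' D'))"
    if k: "k \<le> r div d" "C \<in> CC k" "D \<in> DD k" and l: "l \<le> r div d" "C' \<in> CC l" "D' \<in> DD l"
     and ne: "(k,C,D) \<noteq> (l,C',D')" for k C D l C' D'
  proof (cases "k \<le> l")
    case True
    then show ?thesis using LB1[OF k l ne True] sumeq[OF k(1,3) l(1,3)] by simp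
  next
    case False
    have ne': "(l,C',D') \<noteq> (k,C,D)" using ne by auto
    show ?thesis using LB1[OF l k ne'] False sumeq[OF k(1,3) l(1,3)] by (simp add: Un_commute)
  qed
  have bound: "inj_dist n U V \<le> 2 * r" if UV: "U \<in> E" "V \<in> E" for U V
  proof -
    obtain k C D where k: "k \<le> r div d" "C \<in> CC k" "D \<in> DD k" "U = Sp k C D" using inE[OF UV(1)] by blast
    obtain l C' D' where l: "l \<le> r div d" "C' \<in> CC l" "D' \<in> DD l" "V = Sp l C' D'" using inE[OF UV(2)] by blast
    have c: "set (rows (G k C D)) \<union> set (rows (G l C' D')) \<subseteq> carrier_vec n" using Rc[OF k(1,3)] Rc[OF l(1,3)] by simp
    have "inj_dist n U V \<le> sub_dim n (sub_sum U V)" unfolding inj_dist_def by simp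
    also have "\<dots> = sub_dim n (vspan n (set (rows (G k C D)) \<union> set (rows (G l C' D'))))"
      using sumeq[OF k(1,3) l(1,3)] k l by simp
    also have "\<dots> \<le> card (set (rows (G k C D)) \<union> set (rows (G l C' D')))"
      using vec_space.sd_le_card[OF _ c] by simp
    also have "\<dots> \<le> card (set (rows (G k C D))) + card (set (rows (G l C' D')))" by (rule card_Un_le)
    also have "\<dots> \<le> length (rows (G k C D)) + length (rows (G l C' D'))" by (intro add_mono card_length)
    also have "\<dots> = 2 * r" using carrier_matD[OF GC[OF k(1,3), of C]] carrier_matD[OF GC[OF l(1,3), of C']] by simp
    finally show ?thesis .
  qed
  have lower: "d \<le> inj_dist n U V" if UV: "U \<in> E" "V \<in> E" "U \<noteq> V" for U V
  proof -
    obtain k C D where k: "k \<le> r div d" "C \<in> CC k" "D \<in> DD k" "U = Sp k C D" using inE[OF UV(1)] by blast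
    obtain l C' D' where l: "l \<le> r div d" "C' \<in> CC l" "D' \<in> DD l" "V = Sp l C' D'" using inE[OF UV(2)] by blast
    have ne: "(k,C,D) \<noteq> (l,C',D')" using UV(3) k l by auto
    have "r + d \<le> sub_dim n (sub_sum U V)" using LB2[OF k(1-3) l(1-3) ne] k l by simp
    moreover have "min (sub_dim n U) (sub_dim n V) \<le> r" using up[OF k(1,3), of C] k(4) by (simp add: min_le_iff_disj)
    ultimately show ?thesis unfolding inj_dist_def by simp
  qed
  have q2: "2 \<le> card (UNIV :: 'a set)"
  proof -
    have "card {0::'a, 1} = 2" by simp
    moreover have "card {0::'a, 1} \<le> card (UNIV :: 'a set)" by (rule card_mono) auto
    ultimately show ?thesis by simp
  qed
  have e1: "1 \<le> (n - r) * (r - d + 1)" using assms(1,2) rn by simp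
  have "card (UNIV :: 'a set) ^ 1 \<le> card (UNIV :: 'a set) ^ ((n - r) * (r - d + 1))"
    by (rule power_increasing[OF e1]) (use q2 in simp)
  then have cM: "2 \<le> card M" using assms(5) q2 by simp
  then have finM: "finite M" using card.infinite by fastforce
  have "M \<noteq> {}" using cM by auto
  then obtain x where x: "x \<in> M" by blast
  have c1: "card (M - {x}) \<ge> 1" using cM x finM by simp
  have "M - {x} \<noteq> {}"
  proof
    assume e: "M - {x} = {}"
    from c1 show False unfolding e by simp
  qed
  then obtain y where y: "y \<in> M" "y \<noteq> x" by blast
  obtain C1 C2 where C12: "C1 \<in> M" "C2 \<in> M" "C1 \<noteq> C2" "mrank (C1 - C2) = d"
    using mrd_attain[OF assms(4) x y(1)] y by metis
  define Z where "Z = (0\<^sub>m r 0 :: 'a mat)"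
  have Z: "Z \<in> CC 0" by (simp add: CC_def Z_def)
  have D12: "C1 \<in> DD 0" "C2 \<in> DD 0" using C12 by (auto simp: DD_def)
  have C1c: "C1 \<in> carrier_mat r (n - r)" "C2 \<in> carrier_mat r (n - r)" using C12 assms(4) by (auto simp: is_MRD_def)
  have UE: "Sp 0 Z C2 \<in> E" "Sp 0 Z C1 \<in> E"
  proof -
    have "lift C2 = Sp 0 Z C2" "lift C1 = Sp 0 Z C1"
      using lift_gen[OF C1c(2)] lift_gen[OF C1c(1)] carrier_matD[OF GC[OF _ D12(2), of Z]] carrier_matD[OF GC[OF _ D12(1), of Z]]
      unfolding Sp_def G_def Z_def row_sp_eq by simp_all
    then show "Sp 0 Z C2 \<in> E" "Sp 0 Z C1 \<in> E" unfolding E_def using C12 by blast+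
  qed
  have nn: "n = r + (n - r)" using rn by simp
  have upper: "sub_dim n (sub_sum (Sp 0 Z C2) (Sp 0 Z C1)) \<le> r + d"
    using attain_upper[OF C1c(2) C1c(1) nn, of Z] sumeq[OF _ D12(2) _ D12(1)] C12(4)
    unfolding G_def by simp
  have lowr: "r + d \<le> sub_dim n (sub_sum (Sp 0 Z C2) (Sp 0 Z C1))"
    using LB2[OF _ Z D12(2) _ Z D12(1)] C12(3) by simp
  have dimr: "r \<le> sub_dim n (Sp 0 Z C)" if "C \<in> DD 0" for C
  proof -
    have Gc: "G 0 Z C \<in> carrier_mat r n" using GC[OF _ that, of Z] by simp
    have p: "\<forall>j<r. j < n" using rn by auto
    have piv: "\<forall>i<r. \<forall>j<r. G 0 Z C $$ (i, j) = (if i = j then 1 else 0)"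
      using gen_piv[of _ r 0 _ Z C] unfolding G_def by simp
    have "r + sub_dim n (vspan n ({} :: 'a vec set)) \<le> sub_dim n (vspan n (set (rows (G 0 Z C)) \<union> {}))"
      using vec_space.key[OF Gc p piv, of "{}"] by simp
    then show ?thesis unfolding Sp_def by simp
  qed
  have minr: "min (sub_dim n (Sp 0 Z C2)) (sub_dim n (Sp 0 Z C1)) = r"
    using dimr[OF D12(1)] dimr[OF D12(2)] up[where C=Z, OF _ D12(1)] up[where C=Z, OF _ D12(2)] by simp
  have dist_d: "inj_dist n (Sp 0 Z C2) (Sp 0 Z C1) = d"
    unfolding inj_dist_def minr using upper lowr by simp
  have neq: "Sp 0 Z C2 \<noteq> Sp 0 Z C1"
  proof
    assume eq: "Sp 0 Z C2 = Sp 0 Z C1"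
    have "sub_dim n (sub_sum (Sp 0 Z C2) (Sp 0 Z C1)) \<le> r"
    proof -
      let ?R1 = "set (rows (G 0 Z C2))" and ?R2 = "set (rows (G 0 Z C1))"
      have c1: "?R1 \<subseteq> carrier_vec n" "?R2 \<subseteq> carrier_vec n" using Rc[OF _ D12(2)] Rc[OF _ D12(1)] by auto
      have "?R1 \<union> ?R2 \<subseteq> vspan n ?R1"
        using vec_space.own_span[OF c1(1)] vec_space.own_span[OF c1(2)] eq unfolding Sp_def by auto
      then have "sub_dim n (vspan n (?R1 \<union> ?R2)) \<le> sub_dim n (vspan n ?R1)"
        using vec_space.sd_mono[of "?R1 \<union> ?R2" n ?R1] c1 by simp
      also have "\<dots> \<le> r" using up[where C=Z, OF _ D12(2)] unfolding Sp_def by simp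
      finally show ?thesis using sumeq[OF _ D12(2) _ D12(1)] by simp
    qed
    then show False using lowr d1 by simp
  qed
  let ?A = "{inj_dist n U V | U V. U \<in> E \<and> V \<in> E \<and> U \<noteq> V}"
  have finA: "finite ?A"
    by (rule finite_subset[of _ "{..2*r}"]) (use bound in auto)
  have "Min ?A = d"
  proof (rule Min_eqI[OF finA])
    show "d \<le> y" if "y \<in> ?A" for y using that lower by auto
    show "d \<in> ?A" using UE neq dist_d by blast
  qed
  then show ?thesis unfolding min_inj_dist_def E_def by simp
qed


end
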